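(* For every integer $n\ge 1$, $$\Delta_n=2^{-n}\,\frac{1}{2\pi i}\oint_C \mathbf{1}^{T}\,\frac{A(z)^{n-1}-A(1/z)^{n-1}}{1-z}\,\mathbf{1}\,dz,$$ where $A(z)=\begin{pmatrix}1 & 1/z\\ 1 & z\end{pmatrix}$, $\mathbf 1=(1,1)^T$, and $C$ is any positively oriented simple closed contour in $\mathbb C$ enclosing the origin (and not passing through $0$).
   Context: A fair coin is flipped $n$ times, producing a sequence $x_1,\dots,x_n\in\{H,T\}$ of independent uniformly random outcomes. Alice's score is the number of indices $i\in\{1,\dots,n-1\}$ with $(x_i,x_{i+1})=(H,H)$; Bob's score is the number of indices $i\in\{1,\dots,n-1\}$ with $(x_i,x_{i+1})=(H,T)$. Let $P_n(\mathrm{Bob})$ be the probability that Bob's score is strictly larger than Alice's, $P_n(\mathrm{Alice})$ the probability that Alice's score is strictly larger than Bob's, and $\Delta_n=P_n(\mathrm{Bob})-P_n(\mathrm{Alice})$. *)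

theory Defs
  imports "HOL-Complex_Analysis.Complex_Analysis"
begin

text \<open>Coin sequences of length n: lists of booleans, True = H, False = T.
  All 2^n sequences are equally likely.\<close>

definition alice_score :: "bool list \<Rightarrow> nat" where
  "alice_score x = card {i. i + 1 < length x \<and> x ! i \<and> x ! (i + 1)}"

definition bob_score :: "bool list \<Rightarrow> nat" where
  "bob_score x = card {i. i + 1 < length x \<and> x ! i \<and> \<not> x ! (i + 1)}"

definition coin_seqs :: "nat \<Rightarrow> bool list set" where
  "coin_seqs n = {x. length x = n}"

definition P_Bob :: "nat \<Rightarrow> real" where
  "P_Bob n = real (card {x \<in> coin_seqs n. bob_score x > alice_score x}) / 2 ^ n"

definition P_Alice :: "nat \<Rightarrow> real" where
  "P_Alice n = real (card {x \<in> coin_seqs n. alice_score x > bob_score x}) / 2 ^ n"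

definition Delta :: "nat \<Rightarrow> real" where
  "Delta n = P_Bob n - P_Alice n"

primrec matpow :: "'a::semiring_1 ^'n ^'n \<Rightarrow> nat \<Rightarrow> 'a ^'n ^'n" where
  "matpow M 0 = mat 1"
| "matpow M (Suc k) = M ** matpow M k"

definition Amat :: "complex \<Rightarrow> complex ^2 ^2" where
  "Amat z = vector [vector [1, 1 / z], vector [1, z]]"

definition ones2 :: "complex ^2" where
  "ones2 = vector [1, 1]"

end

theory Submission
  imports Defs
begin


definition dd :: "bool list \<Rightarrow> int" where
  "dd x = int (alice_score x) - int (bob_score x)"

lemma snoc_set:
  fixes P :: "bool \<Rightarrow> bool \<Rightarrow> bool"
  shows "{i. i + 1 < length (x @ [b]) \<and> P ((x @ [b]) ! i) ((x @ [b]) ! (i + 1))} =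
        {i. i + 1 < length x \<and> P (x ! i) (x ! (i + 1))} \<union> (if x \<noteq> [] \<and> P (last x) b then {length x - 1} else {})"
proof (rule set_eqI)
  fix i
  consider "i + 1 < length x" | "i + 1 = length x" | "i + 1 > length x" by linarith
  then show "i \<in> {i. i + 1 < length (x @ [b]) \<and> P ((x @ [b]) ! i) ((x @ [b]) ! (i + 1))} \<longleftrightarrow>
       i \<in> {i. i + 1 < length x \<and> P (x ! i) (x ! (i + 1))} \<union> (if x \<noteq> [] \<and> P (last x) b then {length x - 1} else {})"
  proof cases
    case 1 then show ?thesis by (auto simp: nth_append)
  next
    case 2
    then have "x \<noteq> []" "i = length x - 1" by auto
    moreover have "x ! i = last x" using calculation by (simp add: last_conv_nth)
    ultimately show ?thesis using 2 by (simp add: nth_append)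
  next
    case 3 then show ?thesis by auto
  qed
qed

lemma card_snoc_aux:
  assumes "finite A" "a \<notin> A"
  shows "card (A \<union> (if c then {a} else {})) = card A + (if c then 1 else 0)"
  using assms by (cases c) auto

lemma alice_snoc: "alice_score (x @ [b]) = alice_score x + (if x \<noteq> [] \<and> last x \<and> b then 1 else 0)"
proof -
  have eq: "{i. i + 1 < length (x @ [b]) \<and> (x @ [b]) ! i \<and> (x @ [b]) ! (i + 1)} =
        {i. i + 1 < length x \<and> x ! i \<and> x ! (i + 1)} \<union> (if x \<noteq> [] \<and> last x \<and> b then {length x - 1} else {})"
    using snoc_set[where P="\<lambda>u v. u \<and> v" and x=x and b=b] by simp
  have "length x - 1 \<notin> {i. i + 1 < length x \<and> x ! i \<and> x ! (i + 1)}" by auto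
  moreover have "finite {i. i + 1 < length x \<and> x ! i \<and> x ! (i + 1)}" by (rule finite_subset[of _ "{..<length x}"]) auto
  ultimately show ?thesis unfolding alice_score_def eq by (rule card_snoc_aux[rotated])
qed

lemma bob_snoc: "bob_score (x @ [b]) = bob_score x + (if x \<noteq> [] \<and> last x \<and> \<not> b then 1 else 0)"
proof -
  have eq: "{i. i + 1 < length (x @ [b]) \<and> (x @ [b]) ! i \<and> \<not> (x @ [b]) ! (i + 1)} =
        {i. i + 1 < length x \<and> x ! i \<and> \<not> x ! (i + 1)} \<union> (if x \<noteq> [] \<and> last x \<and> \<not> b then {length x - 1} else {})"
    using snoc_set[where P="\<lambda>u v. u \<and> \<not> v" and x=x and b=b] by simp
  have "length x - 1 \<notin> {i. i + 1 < length x \<and> x ! i \<and> \<not> x ! (i + 1)}" by auto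
  moreover have "finite {i. i + 1 < length x \<and> x ! i \<and> \<not> x ! (i + 1)}" by (rule finite_subset[of _ "{..<length x}"]) auto
  ultimately show ?thesis unfolding bob_score_def eq by (rule card_snoc_aux[rotated])
qed
lemma dd_snoc: "x \<noteq> [] \<Longrightarrow> dd (x @ [b]) = dd x + (if last x then (if b then 1 else -1) else 0)"
  unfolding dd_def by (simp add: alice_snoc bob_snoc)

lemma finite_cs: "finite (coin_seqs n)"
  unfolding coin_seqs_def using finite_lists_length_eq[of "UNIV :: bool set" n] by simp

lemma snoc_img: "{x \<in> coin_seqs (Suc (Suc k)). last x = b} = (\<lambda>x. x @ [b]) ` coin_seqs (Suc k)"
proof (intro equalityI subsetI)
  fix x assume "x \<in> {x \<in> coin_seqs (Suc (Suc k)). last x = b}"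
  then have x: "length x = Suc (Suc k)" "last x = b" by (auto simp: coin_seqs_def)
  then have "x \<noteq> []" by auto
  then have "x = butlast x @ [b]" using x(2) append_butlast_last_id[of x] by simp
  moreover have "butlast x \<in> coin_seqs (Suc k)" using x by (simp add: coin_seqs_def)
  ultimately show "x \<in> (\<lambda>x. x @ [b]) ` coin_seqs (Suc k)" by blast
qed (auto simp: coin_seqs_def)

definition TT :: "complex \<Rightarrow> nat \<Rightarrow> bool \<Rightarrow> complex" where
  "TT z k b = (\<Sum>x\<in>{x \<in> coin_seqs (Suc k). last x = b}. z powi dd x)"

lemma TT_step:
  assumes "z \<noteq> 0"
  shows "TT z (Suc k) b = TT z k False + (if b then z else 1 / z) * TT z k True"
proof -
  have inj: "inj_on (\<lambda>x. x @ [b]) (coin_seqs (Suc k))" by (auto simp: inj_on_def)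
  have ne: "\<And>x. x \<in> coin_seqs (Suc k) \<Longrightarrow> x \<noteq> []" by (auto simp: coin_seqs_def)
  have "TT z (Suc k) b = (\<Sum>x\<in>coin_seqs (Suc k). z powi dd (x @ [b]))"
    unfolding TT_def snoc_img by (simp add: sum.reindex[OF inj])
  also have "\<dots> = (\<Sum>x\<in>coin_seqs (Suc k). if last x then (if b then z else 1/z) * z powi dd x else z powi dd x)"
    apply (rule sum.cong[OF refl])
    using assms ne by (auto simp: dd_snoc power_int_add power_int_diff field_simps)
  also have "\<dots> = (if b then z else 1 / z) * TT z k True + TT z k False"
  proof -
    have e: "- Collect last = {x. \<not> last x}" by auto
    show ?thesis
    unfolding TT_def by (simp add: sum.If_cases finite_cs sum_distrib_left Collect_conj_eq Int_commute e)
  qed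
  finally show ?thesis by simp
qed

lemma Amat_mul: "Amat z *v vector [a, b] = vector [a + b / z, a + z * b]"
  by (simp add: Amat_def matrix_vector_mult_def vec_eq_iff forall_2 sum_2)

lemma matpow_TT:
  assumes "z \<noteq> 0"
  shows "matpow (Amat z) k *v ones2 = vector [TT z k False, TT z k True]"
proof (induction k)
  case 0
  have cs1: "coin_seqs (Suc 0) = {[False],[True]}"
    by (auto simp: coin_seqs_def length_Suc_conv)
  have "{x \<in> coin_seqs (Suc 0). last x = b} = {[b]}" for b unfolding cs1 by auto
  moreover have "dd [b] = 0" for b by (simp add: dd_def alice_score_def bob_score_def)
  ultimately have "TT z 0 b = 1" for b by (simp add: TT_def)
  then show ?case by (simp add: ones2_def)
next
  case (Suc k)
  have "matpow (Amat z) (Suc k) *v ones2 = Amat z *v (matpow (Amat z) k *v ones2)"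
    by (simp add: matrix_vector_mul_assoc)
  also have "\<dots> = vector [TT z k False + TT z k True / z, TT z k False + z * TT z k True]"
    unfolding Suc Amat_mul ..
  also have "\<dots> = vector [TT z (Suc k) False, TT z (Suc k) True]"
    unfolding TT_step[OF assms, of k False] TT_step[OF assms, of k True] by simp
  finally show ?case .
qed

lemma sum_matpow:
  assumes "z \<noteq> 0"
  shows "(\<Sum>i\<in>UNIV. (matpow (Amat z) k *v ones2) $ i) = (\<Sum>x\<in>coin_seqs (Suc k). z powi dd x)"
proof -
  have "(\<Sum>x\<in>coin_seqs (Suc k). z powi dd x) = (\<Sum>x\<in>coin_seqs (Suc k). if last x then z powi dd x else z powi dd x)" by simp
  also have "\<dots> = TT z k True + TT z k False"
    unfolding sum.If_cases[OF finite_cs] TT_def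
    by (simp add: Collect_conj_eq Int_commute Collect_neg_eq[symmetric] Compl_eq)
  finally show ?thesis by (simp add: matpow_TT[OF assms] sum_2)
qed



lemma powi_integral:
  fixes \<gamma> :: "real \<Rightarrow> complex" and k :: int
  assumes vp: "valid_path \<gamma>" and cl: "pathfinish \<gamma> = pathstart \<gamma>"
    and z0: "0 \<notin> path_image \<gamma>" and wn: "winding_number \<gamma> 0 = 1"
  shows "((\<lambda>z. z powi k) has_contour_integral (if k = -1 then 2 * pi * \<i> else 0)) \<gamma>"
proof (cases "k = -1")
  case True
  have "((\<lambda>w. 1 / (w - 0)) has_contour_integral complex_of_real (2 * pi) * \<i> * winding_number \<gamma> 0) \<gamma>"
    by (rule has_contour_integral_winding_number[OF vp z0])
  moreover have "(\<lambda>w. 1 / (w - 0)) = (\<lambda>z::complex. z powi k)"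
    using True by (auto simp: power_int_minus1_right divide_inverse)
  ultimately show ?thesis using True wn by simp
next
  case False
  have "((\<lambda>z. z powi k) has_contour_integral 0) \<gamma>"
  proof (rule Cauchy_theorem_primitive[where S="- {0}" and f="\<lambda>z. z powi (k + 1) / of_int (k + 1)"])
    fix x :: complex assume "x \<in> - {0}"
    then have "x \<noteq> 0" by simp
    then show "((\<lambda>z. z powi (k + 1) / of_int (k + 1)) has_field_derivative x powi k) (at x within - {0})"
    proof -
      have nz: "(of_int (k + 1) :: complex) \<noteq> 0" proof -
        have "k + 1 \<noteq> 0" using False by simp
        then show ?thesis by (metis of_int_eq_0_iff)
      qed
      have "((\<lambda>z. z powi (k + 1)) has_field_derivative of_int (k + 1) * x powi (k + 1 - 1) * 1) (at x within - {0})"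
        by (rule DERIV_power_int[OF DERIV_ident]) (simp add: \<open>x \<noteq> 0\<close>)
      from DERIV_cdivide[OF this, of "of_int (k + 1)"]
      show ?thesis using nz by simp
    qed
  qed (use vp cl z0 in auto)
  then show ?thesis using False by simp
qed


definition gg :: "int \<Rightarrow> complex \<Rightarrow> complex" where
  "gg e z = of_int (- sgn e) * (\<Sum>j<2 * nat \<bar>e\<bar>. z powi (int j - \<bar>e\<bar>))"

lemma gg_integral:
  fixes \<gamma> :: "real \<Rightarrow> complex"
  assumes vp: "valid_path \<gamma>" and cl: "pathfinish \<gamma> = pathstart \<gamma>"
    and z0: "0 \<notin> path_image \<gamma>" and wn: "winding_number \<gamma> 0 = 1"
  shows "(gg e has_contour_integral (2 * pi * \<i> * of_int (- sgn e))) \<gamma>"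
proof -
  define m where "m = nat \<bar>e\<bar>"
  have em: "\<bar>e\<bar> = int m" unfolding m_def by simp
  have "((\<lambda>z. \<Sum>j<2 * m. z powi (int j - int m)) has_contour_integral
        (\<Sum>j<2 * m. if int j - int m = -1 then 2 * pi * \<i> else 0)) \<gamma>"
    by (intro has_contour_integral_sum finite_lessThan powi_integral[OF vp cl z0 wn])
  moreover have "(\<Sum>j<2 * m. if int j - int m = -1 then 2 * pi * \<i> else 0) = (if m = 0 then 0 else 2 * pi * \<i>)"
  proof (cases "m = 0")
    case False
    have "(\<Sum>j<2 * m. if int j - int m = -1 then 2 * pi * \<i> else 0) = (\<Sum>j<2 * m. if j = m - 1 then 2 * pi * \<i> else (0::complex))"
      by (rule sum.cong) (use False in auto)
    also have "\<dots> = 2 * pi * \<i>" using False by (simp add: sum.delta)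
    finally show ?thesis using False by simp
  qed simp
  ultimately have "((\<lambda>z. \<Sum>j<2 * m. z powi (int j - int m)) has_contour_integral
        (if m = 0 then 0 else 2 * pi * \<i>)) \<gamma>" by simp
  from has_contour_integral_lmul[OF this, of "of_int (- sgn e)"]
  have h: "(gg e has_contour_integral of_int (- sgn e) * (if m = 0 then 0 else 2 * pi * \<i>)) \<gamma>"
    unfolding gg_def m_def[symmetric] em by simp
  have eq: "of_int (- sgn e) * (if m = 0 then 0 else 2 * pi * \<i>) = 2 * pi * \<i> * (of_int (- sgn e) :: complex)"
    using em by (cases "m = 0") auto
  show ?thesis using h unfolding eq .
qed

lemma gg_eq:
  fixes z :: complex
  assumes "z \<noteq> 0" "z \<noteq> 1"
  shows "(z powi e - z powi (- e)) / (1 - z) = gg e z"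
proof -
  define m where "m = nat \<bar>e\<bar>"
  have em: "\<bar>e\<bar> = int m" unfolding m_def by simp
  have zm: "z ^ m \<noteq> 0" using assms by simp
  have S: "(\<Sum>j<2 * m. z powi (int j - int m)) = (1 - z ^ m * z ^ m) / ((1 - z) * z ^ m)"
  proof -
    have "(\<Sum>j<2 * m. z powi (int j - int m)) = (\<Sum>j<2 * m. z ^ j / z ^ m)"
      using assms by (simp add: power_int_diff power_int_of_nat)
    also have "\<dots> = (\<Sum>j<2 * m. z ^ j) / z ^ m" by (simp add: sum_divide_distrib)
    also have "\<dots> = (1 - z ^ (2 * m)) / (1 - z) / z ^ m" using assms by (simp add: sum_gp_strict)
    also have "z ^ (2 * m) = z ^ m * z ^ m" by (simp add: mult_2 power_add)
    finally show ?thesis by simp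
  qed
  have d: "1 - z \<noteq> 0" using assms by simp
  show ?thesis
  proof (cases "e \<ge> 0")
    case True
    then have e: "e = int m" using em by simp
    show ?thesis unfolding gg_def em nat_int S unfolding e using zm d
      by (cases "m = 0") (auto simp: power_int_minus power_int_of_nat field_simps)
  next
    case False
    then have e: "e = - int m" using em by simp
    show ?thesis unfolding gg_def em nat_int S unfolding e using zm d False
      by (auto simp: power_int_minus power_int_of_nat field_simps)
  qed
qed



lemma finite_hits:
  assumes "simple_path \<gamma>"
  shows "finite {t\<in>{0..1}. \<gamma> t = (c::complex)}"
proof (cases "{t\<in>{0..1}. \<gamma> t = c} = {}")
  case False
  then obtain s where s: "s \<in> {0..1}" "\<gamma> s = c" by auto
  have lf: "loop_free \<gamma>" using assms by (simp add: simple_path_def)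
  have "{t\<in>{0..1}. \<gamma> t = c} \<subseteq> {s, 0, 1}"
  proof
    fix t assume t: "t \<in> {t\<in>{0..1}. \<gamma> t = c}"
    then have "t = s \<or> t = 0 \<and> s = 1 \<or> t = 1 \<and> s = 0"
      using lf s unfolding loop_free_def by (metis (mono_tags, lifting) mem_Collect_eq)
    then show "t \<in> {s, 0, 1}" by auto
  qed
  then show ?thesis by (rule finite_subset) simp
next
  case True
  show ?thesis unfolding True by simp
qed

lemma count_sum:
  "(\<Sum>x\<in>coin_seqs n. (of_int (- sgn (dd x)) :: complex)) =
   of_nat (card {x \<in> coin_seqs n. bob_score x > alice_score x}) - of_nat (card {x \<in> coin_seqs n. alice_score x > bob_score x})"
proof -
  have a: "(\<Sum>x\<in>coin_seqs n. (if P x then 1 else 0 :: complex)) = of_nat (card {x\<in>coin_seqs n. P x})" for P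
    by (simp add: sum.inter_filter[OF finite_cs, symmetric])
  have "(\<Sum>x\<in>coin_seqs n. (of_int (- sgn (dd x)) :: complex)) =
        (\<Sum>x\<in>coin_seqs n. (if bob_score x > alice_score x then 1 else 0) - (if alice_score x > bob_score x then 1 else 0))"
    by (rule sum.cong) (auto simp: dd_def sgn_if)
  also have "\<dots> = (\<Sum>x\<in>coin_seqs n. (if bob_score x > alice_score x then 1 else 0)) - (\<Sum>x\<in>coin_seqs n. (if alice_score x > bob_score x then 1 else 0))"
    by (simp add: sum_subtractf)
  also have "\<dots> = of_nat (card {x \<in> coin_seqs n. bob_score x > alice_score x}) - of_nat (card {x \<in> coin_seqs n. alice_score x > bob_score x})"
    unfolding a ..
  finally show ?thesis .
qed

theorem mainTheorem2:
  fixes n :: nat and \<gamma> :: "real \<Rightarrow> complex"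
  assumes "n \<ge> 1"
    and "valid_path \<gamma>" and "simple_path \<gamma>" and "pathfinish \<gamma> = pathstart \<gamma>"
    and "0 \<notin> path_image \<gamma>" and "winding_number \<gamma> 0 = 1"
  shows "complex_of_real (Delta n) =
    (1 / 2) ^ n * (1 / (2 * pi * \<i>)) *
    contour_integral \<gamma>
      (\<lambda>z. (\<Sum>i\<in>UNIV. (((matpow (Amat z) (n - 1) - matpow (Amat (1 / z)) (n - 1)) *v ones2) $ i)) / (1 - z))"
proof -
  note vp = assms(2) and sp = assms(3) and cl = assms(4) and z0 = assms(5) and wn = assms(6)
  define I where "I = (\<lambda>z. (\<Sum>i\<in>UNIV. (((matpow (Amat z) (n - 1) - matpow (Amat (1 / z)) (n - 1)) *v ones2) $ i)) / (1 - z))"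
  define R where "R = (\<lambda>z. \<Sum>x\<in>coin_seqs n. gg (dd x) z)"
  define C where "C = (\<Sum>x\<in>coin_seqs n. (of_int (- sgn (dd x)) :: complex))"
  have nn: "Suc (n - 1) = n" using assms(1) by simp
  have IR: "I z = R z" if "z \<noteq> 0" "z \<noteq> 1" for z
  proof -
    have z': "1 / z \<noteq> 0" using that by simp
    have "I z = ((\<Sum>x\<in>coin_seqs n. z powi dd x) - (\<Sum>x\<in>coin_seqs n. z powi (- dd x))) / (1 - z)"
      unfolding I_def matrix_vector_mult_diff_rdistrib vector_minus_component sum_subtractf
        sum_matpow[OF that(1)] sum_matpow[OF z'] nn
      by (simp add: power_int_one_over power_int_minus_divide)
    also have "\<dots> = (\<Sum>x\<in>coin_seqs n. (z powi dd x - z powi (- dd x)) / (1 - z))"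
      by (simp add: sum_subtractf sum_divide_distrib[symmetric])
    also have "\<dots> = R z" unfolding R_def using gg_eq[OF that] by simp
    finally show ?thesis .
  qed
  have hR: "(R has_contour_integral (\<Sum>x\<in>coin_seqs n. 2 * pi * \<i> * of_int (- sgn (dd x)))) \<gamma>"
    unfolding R_def by (intro has_contour_integral_sum finite_cs gg_integral[OF vp cl z0 wn])
  have hI: "(I has_contour_integral (\<Sum>x\<in>coin_seqs n. 2 * pi * \<i> * of_int (- sgn (dd x)))) \<gamma>"
    using hR unfolding has_contour_integral_def
  proof (rule has_integral_spike_finite[OF finite_hits[OF sp, of 1], rotated])
    fix t assume t: "t \<in> {0..1} - {t \<in> {0..1}. \<gamma> t = 1}"
    then have "\<gamma> t \<noteq> 1" by auto
    moreover have "\<gamma> t \<noteq> 0" using t z0 unfolding path_image_def by auto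
    ultimately show "I (\<gamma> t) * vector_derivative \<gamma> (at t within {0..1}) =
         R (\<gamma> t) * vector_derivative \<gamma> (at t within {0..1})" using IR by simp
  qed
  have "contour_integral \<gamma> I = 2 * pi * \<i> * C"
    using contour_integral_unique[OF hI] unfolding C_def by (simp add: sum_distrib_left)
  moreover have "C = of_real (real (card {x \<in> coin_seqs n. bob_score x > alice_score x}) - real (card {x \<in> coin_seqs n. alice_score x > bob_score x}))"
    unfolding C_def count_sum by simp
  ultimately have "(1 / 2) ^ n * (1 / (2 * pi * \<i>)) * contour_integral \<gamma> I = complex_of_real (Delta n)"
    unfolding Delta_def P_Bob_def P_Alice_def by (simp add: field_simps)
  then show ?thesis unfolding I_def by simp
qed

end
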